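(* Let $n\ge 2$ and let $\alpha,\beta,x$ be independent random variables, each uniformly distributed on $\{0,\dots,2^n-1\}$. Let $c_i$ be the carry bit entering position $i$ of $\alpha+x$ (so $c_0=0$, $c_{i+1}=\mathrm{maj}(x_i,\alpha_i,c_i)$), and let $\tilde y=((\alpha\dotplus x)\oplus(\beta\dotplus x))\oplus\alpha\oplus\beta=\sum_{i=0}^{n-1}\tilde y_i2^i$. Then for every $i=0,\dots,n-1$, $$\Pr(c_i=1)=\frac{2^i-1}{2^{i+1}},\qquad \Pr(\tilde y_i=0)=\frac23+\frac{1}{3\cdot 4^i}.$$
   Context: $a\dotplus b=(a+b)\bmod 2^n$; $\oplus$ is bitwise XOR; $\mathrm{maj}(p,q,r)=(pq)\oplus(pr)\oplus(qr)$; $x_i,\alpha_i$ denote the $i$-th binary digits (bit $0$ least significant). *)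

theory Defs
  imports "HOL-Probability.Probability"
begin

definition maj :: "bool \<Rightarrow> bool \<Rightarrow> bool \<Rightarrow> bool" where
  "maj p q r = (((p \<and> q) \<noteq> (p \<and> r)) \<noteq> (q \<and> r))"

fun carry :: "nat \<Rightarrow> nat \<Rightarrow> nat \<Rightarrow> bool" where
  "carry a x 0 = False"
| "carry a x (Suc i) = maj (bit x i) (bit a i) (carry a x i)"

definition addmod :: "nat \<Rightarrow> nat \<Rightarrow> nat \<Rightarrow> nat" where
  "addmod n a b = (a + b) mod 2 ^ n"

definition ytilde :: "nat \<Rightarrow> nat \<Rightarrow> nat \<Rightarrow> nat \<Rightarrow> nat" where
  "ytilde n a b x = xor (xor (xor (addmod n a x) (addmod n b x)) a) b"

definition unif :: "nat \<Rightarrow> nat pmf" where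
  "unif n = pmf_of_set {0..<2 ^ n}"

end

theory Submission
  imports Defs
begin


lemma carry_mod: "carry a x i = (2^i \<le> a mod 2^i + x mod 2^i)"
proof (induction i)
  case 0 then show ?case by simp
next
  case (Suc i)
  have ma: "a mod 2^Suc i = 2^i * (a div 2^i mod 2) + a mod 2^i"
    unfolding power_Suc2 by (rule mod_mult2_eq)
  have mx: "x mod 2^Suc i = 2^i * (x div 2^i mod 2) + x mod 2^i"
    unfolding power_Suc2 by (rule mod_mult2_eq)
  have A: "a mod 2^i < 2^i" and X: "x mod 2^i < 2^i" by simp_all
  have ba: "bit a i = (a div 2^i mod 2 = 1)" by (simp add: bit_nat_def odd_iff_mod_2_eq_one)
  have bx: "bit x i = (x div 2^i mod 2 = 1)" by (simp add: bit_nat_def odd_iff_mod_2_eq_one)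
  have AX: "a mod 2^i + x mod 2^i < 2*2^i" using A X by linarith
  have da: "a div 2^i mod 2 = 0 \<or> a div 2^i mod 2 = 1" by auto
  have dx: "x div 2^i mod 2 = 0 \<or> x div 2^i mod 2 = 1" by auto
  show ?case unfolding carry.simps Suc ma mx ba bx maj_def
    using da dx A X AX by (auto simp: power_Suc2)
qed

lemma bit_add: "bit (a+x) i = (bit a i \<noteq> (bit x i \<noteq> carry a x i))"
proof -
  have d: "(a+x) div 2^i = a div 2^i + x div 2^i + (a mod 2^i + x mod 2^i) div 2^i"
    by (rule div_add1_eq)
  have c: "(a mod 2^i + x mod 2^i) div 2^i = (if carry a x i then 1 else 0)"
  proof (cases "carry a x i")
    case True
    then have "2^i \<le> a mod 2^i + x mod 2^i" by (simp add: carry_mod)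
    moreover have "a mod 2^i + x mod 2^i < 2 * 2^i" 
    proof -
      have "a mod 2^i < (2::nat)^i" "x mod 2^i < (2::nat)^i" by simp_all
      then show ?thesis by linarith
    qed
    ultimately have "(a mod 2^i + x mod 2^i) div 2^i = 1"
      by (intro div_nat_eqI) simp_all
    then show ?thesis using True by simp
  next
    case False
    then show ?thesis by (simp add: carry_mod)
  qed
  show ?thesis unfolding bit_nat_def d c by auto
qed

lemma ytilde_bit: "i < n \<Longrightarrow> bit (ytilde n a b x) i = (carry a x i \<noteq> carry b x i)"
  unfolding ytilde_def addmod_def
  by (auto simp: bit_xor_iff take_bit_eq_mod[symmetric] bit_take_bit_iff bit_add)




lemma sum_split2: "(\<Sum>l<2*k. f l) = (\<Sum>l<k. f l + f (l+k))" for f :: "nat \<Rightarrow> nat"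
proof -
  have "(\<Sum>l<2*k. f l) = (\<Sum>l\<in>{0..<k}. f l) + (\<Sum>l\<in>{k..<k+k}. f l)"
    by (metis atLeast0LessThan le_add1 mult_2 sum.atLeastLessThan_concat zero_le)
  also have "(\<Sum>l\<in>{k..<k+k}. f l) = (\<Sum>l\<in>{0..<k}. f (l+k))"
    using sum.shift_bounds_nat_ivl[of f 0 k k] by simp
  finally show ?thesis by (simp add: atLeast0LessThan sum.distrib)
qed

lemma sum3_split: "(\<Sum>a<2*k. \<Sum>b<2*k. \<Sum>x<2*k. f a b x) =
  (\<Sum>a<k. \<Sum>b<k. \<Sum>x<k. f a b x + f a b (x+k) + f a (b+k) x + f a (b+k) (x+k)
     + f (a+k) b x + f (a+k) b (x+k) + f (a+k) (b+k) x + f (a+k) (b+k) (x+k))"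
  for f :: "nat \<Rightarrow> nat \<Rightarrow> nat \<Rightarrow> nat"
  by (simp add: sum_split2 sum.distrib add.assoc)



lemma carry_shift1: "i \<le> m \<Longrightarrow> carry (a + 2^m) x i = carry a x i"
proof -
  assume "i \<le> m"
  then obtain k where k: "(2::nat)^m = 2^i * k" using le_imp_power_dvd by blast
  show ?thesis by (simp add: carry_mod k)
qed

lemma carry_shift2: "i \<le> m \<Longrightarrow> carry a (x + 2^m) i = carry a x i"
proof -
  assume "i \<le> m"
  then obtain k where k: "(2::nat)^m = 2^i * k" using le_imp_power_dvd by blast
  show ?thesis by (simp add: carry_mod k)
qed

lemma bit_low: "a < 2^i \<Longrightarrow> \<not> bit a i" for a :: nat
  by (simp add: bit_nat_def)

lemma bit_hi: "a < 2^i \<Longrightarrow> bit (a + 2^i) i" for a :: nat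
  by (simp add: bit_nat_def)

lemma step_lemmas:
  assumes "a < 2^i" "x < 2^i"
  shows "carry a x (Suc i) = False" "carry (a+2^i) x (Suc i) = carry a x i"
    "carry a (x+2^i) (Suc i) = carry a x i" "carry (a+2^i) (x+2^i) (Suc i) = True"
  using assms by (simp_all add: maj_def bit_low bit_hi carry_shift1 carry_shift2)

definition CT1 :: "nat \<Rightarrow> nat \<Rightarrow> nat" where
  "CT1 m i = (\<Sum>a<2^m. \<Sum>b::nat<2^m. \<Sum>x<2^m. if carry a x i then 1 else 0)"
definition CT2 :: "nat \<Rightarrow> nat \<Rightarrow> nat" where
  "CT2 m i = (\<Sum>a<2^m. \<Sum>b<2^m. \<Sum>x<2^m. if carry a x i = carry b x i then 1 else 0)"




lemma T1_up: "i \<le> m \<Longrightarrow> CT1 (Suc m) i = 8 * CT1 m i"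
proof -
  assume im: "i \<le> m"
  have "CT1 (Suc m) i = (\<Sum>a<2^m. \<Sum>b::nat<2^m. \<Sum>x<2^m. 8 * (if carry a x i then 1 else 0))"
    unfolding CT1_def power_Suc sum3_split
    by (intro sum.cong refl) (simp add: carry_shift1 carry_shift2 im)
  also have "\<dots> = 8 * CT1 m i" by (simp only: CT1_def sum_distrib_left)
  finally show ?thesis .
qed




lemma eight: "t+t+t+t+t+t+t+t = 8*(t::nat)" by simp

lemma T2_up: "i \<le> m \<Longrightarrow> CT2 (Suc m) i = 8 * CT2 m i"
proof -
  assume im: "i \<le> m"
  have "CT2 (Suc m) i = (\<Sum>a<2^m. \<Sum>b<2^m. \<Sum>x<2^m. 8 * (if carry a x i = carry b x i then 1 else 0))"
    unfolding CT2_def power_Suc sum3_split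
    by (intro sum.cong refl) (simp only: carry_shift1[OF im] carry_shift2[OF im] eight)
  also have "\<dots> = 8 * CT2 m i" by (simp only: CT2_def sum_distrib_left)
  finally show ?thesis .
qed




lemma T1_step: "CT1 (Suc i) (Suc i) = 2 * 8^i + 4 * CT1 i i"
proof -
  have "CT1 (Suc i) (Suc i) = (\<Sum>a<2^i. \<Sum>b::nat<2^i. \<Sum>x<2^i. 2 + 4 * (if carry a x i then 1 else 0))"
    unfolding CT1_def power_Suc sum3_split
  proof (intro sum.cong refl)
    fix a b x :: nat
    assume "a \<in> {..<2^i}" "b \<in> {..<2^i}" "x \<in> {..<2^i}"
    then have a: "a < 2^i" and x: "x < 2^i" by auto
    show "(if carry a x (Suc i) then 1 else 0) + (if carry a (x + 2 ^ i) (Suc i) then 1 else 0) +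
       (if carry a x (Suc i) then 1 else 0) + (if carry a (x + 2 ^ i) (Suc i) then 1 else 0) +
       (if carry (a + 2 ^ i) x (Suc i) then 1 else 0) + (if carry (a + 2 ^ i) (x + 2 ^ i) (Suc i) then 1 else 0) +
       (if carry (a + 2 ^ i) x (Suc i) then 1 else 0) + (if carry (a + 2 ^ i) (x + 2 ^ i) (Suc i) then 1 else 0) =
       2 + 4 * (if carry a x i then 1 else (0::nat))"
      by (simp only: step_lemmas[OF a x]) (cases "carry a x i"; simp)
  qed
  also have "\<dots> = (\<Sum>a::nat<2^i. \<Sum>b::nat<2^i. \<Sum>x<(2::nat)^i. 2::nat) + 4 * CT1 i i"
    by (simp only: CT1_def sum.distrib sum_distrib_left)
  also have "(\<Sum>a::nat<2^i. \<Sum>b::nat<2^i. \<Sum>x<(2::nat)^i. 2::nat) = 2 * 8^i"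
    by (simp add: power_mult_distrib[symmetric])
  finally show ?thesis .
qed




lemma T2_step: "CT2 (Suc i) (Suc i) = 4 * 8^i + 2 * CT2 i i"
proof -
  have "CT2 (Suc i) (Suc i) = (\<Sum>a<2^i. \<Sum>b<2^i. \<Sum>x<2^i. 4 + 2 * (if carry a x i = carry b x i then 1 else 0))"
    unfolding CT2_def power_Suc sum3_split
  proof (intro sum.cong refl)
    fix a b x :: nat
    assume "a \<in> {..<2^i}" "b \<in> {..<2^i}" "x \<in> {..<2^i}"
    then have a: "a < 2^i" and b: "b < 2^i" and x: "x < 2^i" by auto
    show "(if carry a x (Suc i) = carry b x (Suc i) then 1 else 0) +
       (if carry a (x + 2 ^ i) (Suc i) = carry b (x + 2 ^ i) (Suc i) then 1 else 0) +
       (if carry a x (Suc i) = carry (b + 2 ^ i) x (Suc i) then 1 else 0) +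
       (if carry a (x + 2 ^ i) (Suc i) = carry (b + 2 ^ i) (x + 2 ^ i) (Suc i) then 1 else 0) +
       (if carry (a + 2 ^ i) x (Suc i) = carry b x (Suc i) then 1 else 0) +
       (if carry (a + 2 ^ i) (x + 2 ^ i) (Suc i) = carry b (x + 2 ^ i) (Suc i) then 1 else 0) +
       (if carry (a + 2 ^ i) x (Suc i) = carry (b + 2 ^ i) x (Suc i) then 1 else 0) +
       (if carry (a + 2 ^ i) (x + 2 ^ i) (Suc i) = carry (b + 2 ^ i) (x + 2 ^ i) (Suc i) then 1 else 0) =
       4 + 2 * (if carry a x i = carry b x i then 1 else (0::nat))"
      by (simp only: step_lemmas[OF a x] step_lemmas[OF b x])
        (cases "carry a x i"; cases "carry b x i"; simp)
  qed
  also have "\<dots> = (\<Sum>a::nat<2^i. \<Sum>b::nat<2^i. \<Sum>x<(2::nat)^i. 4::nat) + 2 * CT2 i i"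
    by (simp only: CT2_def sum.distrib sum_distrib_left)
  also have "(\<Sum>a::nat<2^i. \<Sum>b::nat<2^i. \<Sum>x<(2::nat)^i. 4::nat) = 4 * 8^i"
    by (simp add: power_mult_distrib[symmetric])
  finally show ?thesis .
qed

lemma CT1_val: "real (CT1 i i) = 8^i * (2^i - 1) / 2^(i+1)"
proof (induction i)
  case 0 then show ?case by (simp add: CT1_def)
next
  case (Suc i)
  show ?case unfolding T1_step of_nat_add of_nat_mult Suc
    by (simp add: field_simps)
qed

lemma CT2_val: "real (CT2 i i) = 8^i * (2/3 + 1/(3*4^i))"
proof (induction i)
  case 0 then show ?case by (simp add: CT2_def)
next
  case (Suc i)
  show ?case unfolding T2_step of_nat_add of_nat_mult Suc
    by (simp add: field_simps)
qed

lemma CT1_lift: "i \<le> m \<Longrightarrow> CT1 m i = 8^(m-i) * CT1 i i"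
proof (induction m rule: dec_induct)
  case base then show ?case by simp
next
  case (step m) then show ?case by (simp add: T1_up Suc_diff_le)
qed

lemma CT2_lift: "i \<le> m \<Longrightarrow> CT2 m i = 8^(m-i) * CT2 i i"
proof (induction m rule: dec_induct)
  case base then show ?case by simp
next
  case (step m) then show ?case by (simp add: T2_up Suc_diff_le)
qed




lemma pair_pmf_of_set_eq:
  assumes "finite A" "A \<noteq> {}" "finite B" "B \<noteq> {}"
  shows "pair_pmf (pmf_of_set A) (pmf_of_set B) = pmf_of_set (A \<times> B)"
proof (rule pmf_eqI)
  fix z :: "'a \<times> 'b"
  show "pmf (pair_pmf (pmf_of_set A) (pmf_of_set B)) z = pmf (pmf_of_set (A \<times> B)) z"
    using assms by (cases z) (simp add: pmf_pair card_cartesian_product indicator_def)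
qed

lemma card3: "finite A \<Longrightarrow> card (A \<times> A \<times> A \<inter> {(a,b,x). P a b x}) =
   (\<Sum>a\<in>A. \<Sum>b\<in>A. \<Sum>x\<in>A. if P a b x then 1 else 0)"
proof -
  assume fA: "finite A"
  have "card (A \<times> A \<times> A \<inter> {(a,b,x). P a b x}) = (\<Sum>z\<in>A \<times> A \<times> A \<inter> {(a,b,x). P a b x}. 1)"
    by simp
  also have "\<dots> = (\<Sum>z\<in>A \<times> A \<times> A. if z \<in> {(a,b,x). P a b x} then 1 else 0)"
    using fA by (intro sum.inter_restrict) simp
  also have "\<dots> = (\<Sum>a\<in>A. \<Sum>b\<in>A. \<Sum>x\<in>A. if P a b x then 1 else 0)"
    by (simp add: sum.cartesian_product case_prod_beta)
  finally show ?thesis .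
qed

theorem mainTheorem6:
  fixes n i :: nat
  assumes "n \<ge> 2" and "i < n"
  defines "M \<equiv> pair_pmf (unif n) (pair_pmf (unif n) (unif n))"
  shows "measure_pmf.prob M {(a, b, x). carry a x i} = (2 ^ i - 1) / 2 ^ (i + 1)
       \<and> measure_pmf.prob M {(a, b, x). \<not> bit (ytilde n a b x) i}
           = 2 / 3 + 1 / (3 * 4 ^ i)"
proof -
  let ?B = "{..<(2::nat)^n}"
  have M: "M = pmf_of_set (?B \<times> ?B \<times> ?B)"
  proof -
    have "0 \<in> ?B" by simp
    then have "?B \<noteq> {}" by blast
    then have f: "finite ?B" "?B \<noteq> {}" by simp_all
    have "pair_pmf (pmf_of_set ?B) (pmf_of_set ?B) = pmf_of_set (?B \<times> ?B)"
      by (rule pair_pmf_of_set_eq[OF f f])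
    moreover have "pair_pmf (pmf_of_set ?B) (pmf_of_set (?B \<times> ?B)) = pmf_of_set (?B \<times> ?B \<times> ?B)"
      using f by (intro pair_pmf_of_set_eq) simp_all
    ultimately show ?thesis unfolding M_def unif_def atLeast0LessThan by simp
  qed
  have cB: "card (?B \<times> ?B \<times> ?B) = 8^n"
    by (simp add: card_cartesian_product power_mult_distrib[symmetric])
  have "(0,0,0) \<in> ?B \<times> ?B \<times> ?B" by simp
  then have ne: "?B \<times> ?B \<times> ?B \<noteq> {}" by blast
  have e8: "(8::real)^(n-i) * 8^i = 8^n"
    using assms(2) by (simp add: power_add[symmetric])
  have fin: "finite (?B \<times> ?B \<times> ?B)" by simp
  have gen: "measure_pmf.prob M {(a, b, x). P a b x} =
     real (\<Sum>a<2^n. \<Sum>b<2^n. \<Sum>x<(2::nat)^n. if P a b x then 1 else 0) / 8^n" for P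
  proof -
    have "measure_pmf.prob M {(a, b, x). P a b x} =
       real (card (?B \<times> ?B \<times> ?B \<inter> {(a, b, x). P a b x})) / real (card (?B \<times> ?B \<times> ?B))"
      unfolding M by (rule measure_pmf_of_set[OF ne fin])
    also have "card (?B \<times> ?B \<times> ?B \<inter> {(a, b, x). P a b x}) =
        (\<Sum>a<2^n. \<Sum>b<2^n. \<Sum>x<(2::nat)^n. if P a b x then 1 else 0)"
      by (rule card3) simp
    finally show ?thesis by (simp only: cB of_nat_power of_nat_numeral)
  qed
  have P1: "measure_pmf.prob M {(a, b, x). carry a x i} = real (CT1 n i) / 8^n"
    unfolding gen CT1_def ..
  have P2: "measure_pmf.prob M {(a, b, x). \<not> bit (ytilde n a b x) i} = real (CT2 n i) / 8^n"
    unfolding gen CT2_def by (simp add: ytilde_bit[OF assms(2)])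
  have in_: "i \<le> n" using assms(2) by simp
  have r1: "real (CT1 n i) = 8^(n-i) * (8^i * (2^i - 1) / 2^(i+1))"
    unfolding CT1_lift[OF in_] of_nat_mult of_nat_power CT1_val by simp
  have r2: "real (CT2 n i) = 8^(n-i) * (8^i * (2/3 + 1/(3*4^i)))"
    unfolding CT2_lift[OF in_] of_nat_mult of_nat_power CT2_val by simp
  have n8: "(8::real)^n \<noteq> 0" by simp
  have "real (CT1 n i) / 8^n = (2 ^ i - 1) / 2 ^ (i + 1)"
    unfolding r1 mult.assoc[symmetric] times_divide_eq_right[symmetric] e8 using n8 by simp
  moreover have "real (CT2 n i) / 8^n = 2 / 3 + 1 / (3 * 4 ^ i)"
    unfolding r2 mult.assoc[symmetric] e8 using n8 by simp
  ultimately show ?thesis using P1 P2 by simp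
qed


end
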